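(* For every integer $n\geq 4$, the $2$-extra edge-connectivity of the $n$-dimensional augmented cube satisfies $\lambda_2(AQ_n)=6n-9$.
   Context: The $n$-dimensional augmented cube $AQ_n$ has vertex set $\{0,1\}^n$, vertices written as strings $X=x_nx_{n-1}\cdots x_1$. For $1\le i\le n$ let $X_i=x_n\cdots x_{i+1}\bar x_i x_{i-1}\cdots x_1$ (flip bit $i$) and $\overline{X}_i=x_n\cdots x_{i+1}\bar x_i\bar x_{i-1}\cdots\bar x_1$ (flip bits $i,i-1,\dots,1$), where $\bar x=1-x$. Two distinct vertices $X,Y$ are adjacent iff $Y=X_i$ for some $1\le i\le n$ or $Y=\overline{X}_i$ for some $2\le i\le n$. For a graph $G$ and integer $h\ge0$, an edge set $F\subseteq E(G)$ is an $h$-edge-cut if $G-F$ is disconnected and every component of $G-F$ has more than $h$ vertices; the $h$-extra edge-connectivity $\lambda_h(G)$ is the minimum cardinality of an $h$-edge-cut of $G$. *)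

theory Defs
  imports Main
begin

text \<open>Vertices of AQ_n: binary strings x_n ... x_1 encoded as the set of positions
  i in {1..n} with x_i = 1.\<close>

definition AQ_vertices :: "nat \<Rightarrow> nat set set" where
  "AQ_vertices n = Pow {1..n}"

definition flip_bit :: "nat set \<Rightarrow> nat \<Rightarrow> nat set" where
  "flip_bit X i = (X - {i}) \<union> ({i} - X)"

definition flip_upto :: "nat set \<Rightarrow> nat \<Rightarrow> nat set" where
  "flip_upto X i = (X - {1..i}) \<union> ({1..i} - X)"

definition AQ_adj :: "nat \<Rightarrow> nat set \<Rightarrow> nat set \<Rightarrow> bool" where
  "AQ_adj n X Y \<longleftrightarrow> X \<in> AQ_vertices n \<and> Y \<in> AQ_vertices n \<and> X \<noteq> Y \<and>
     ((\<exists>i\<in>{1..n}. Y = flip_bit X i) \<or> (\<exists>i\<in>{2..n}. Y = flip_upto X i))"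

definition AQ_edges :: "nat \<Rightarrow> nat set set set" where
  "AQ_edges n = {{X, Y} | X Y. AQ_adj n X Y}"

definition edge_rel :: "'a set set \<Rightarrow> ('a \<times> 'a) set" where
  "edge_rel E = {(x, y). {x, y} \<in> E \<and> x \<noteq> y}"

definition component :: "'a set \<Rightarrow> 'a set set \<Rightarrow> 'a \<Rightarrow> 'a set" where
  "component V E x = {y \<in> V. (x, y) \<in> (edge_rel E)\<^sup>*}"

definition graph_connected :: "'a set \<Rightarrow> 'a set set \<Rightarrow> bool" where
  "graph_connected V E \<longleftrightarrow> (\<forall>x\<in>V. \<forall>y\<in>V. (x, y) \<in> (edge_rel E)\<^sup>*)"

definition h_edge_cut :: "'a set \<Rightarrow> 'a set set \<Rightarrow> nat \<Rightarrow> 'a set set \<Rightarrow> bool" where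
  "h_edge_cut V E h F \<longleftrightarrow> F \<subseteq> E \<and> \<not> graph_connected V (E - F) \<and>
     (\<forall>x\<in>V. card (component V (E - F) x) > h)"

definition extra_edge_connectivity :: "'a set \<Rightarrow> 'a set set \<Rightarrow> nat \<Rightarrow> nat" where
  "extra_edge_connectivity V E h = (LEAST k. \<exists>F. h_edge_cut V E h F \<and> card F = k)"

end

theory Submission
  imports Defs
begin

definition sd :: "nat set \<Rightarrow> nat set \<Rightarrow> nat set" where "sd A B = (A - B) \<union> (B - A)"

lemma sd_sd[simp]: "sd (sd A B) B = A" by (auto simp: sd_def)
lemma sd_swap: "sd (sd X T) D = sd (sd X D) T" by (auto simp: sd_def)
lemma sd_inj2: "sd X A = sd X B \<longleftrightarrow> A = B" by (auto simp: sd_def)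
lemma sd_inj1: "sd A D = sd B D \<longleftrightarrow> A = B" by (auto simp: sd_def)
lemma sd_self_iff: "sd X D = X \<longleftrightarrow> D = {}" by (auto simp: sd_def)
lemma sd_sub: "X \<subseteq> U \<Longrightarrow> D \<subseteq> U \<Longrightarrow> sd X D \<subseteq> U" by (auto simp: sd_def)
lemma sd_mem: "k \<in> sd X D \<longleftrightarrow> (k \<in> X \<longleftrightarrow> k \<notin> D)" by (auto simp: sd_def)

definition Gen :: "nat \<Rightarrow> nat set set" where
  "Gen m = (\<lambda>i. {i}) ` {1..m} \<union> (\<lambda>i. {1..i}) ` {2..m}"

lemma Gen_sub: "D \<in> Gen m \<Longrightarrow> D \<subseteq> {1..m}" by (auto simp: Gen_def)
lemma Gen_ne: "D \<in> Gen m \<Longrightarrow> D \<noteq> {}" by (auto simp: Gen_def)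
lemma finite_Gen[simp]: "finite (Gen m)" by (simp add: Gen_def)

lemma card_Gen: assumes "m \<ge> 1" shows "card (Gen m) = 2*m - 1"
proof -
  have i1: "inj_on (\<lambda>i::nat. {i}) {1..m}" by (auto simp: inj_on_def)
  have i2: "inj_on (\<lambda>i::nat. {1..i}) {2..m}"
    by (auto simp: inj_on_def)
  have d: "(\<lambda>i::nat. {i}) ` {1..m} \<inter> (\<lambda>i. {1..i}) ` {2..m} = {}"
  proof (rule ccontr)
    assume "\<not> ?thesis"
    then obtain i j where "i \<in> {1..m}" "j \<in> {2..m}" "{i} = {1..j}" by blast
    then have "1 \<in> {i}" "2 \<in> {i}" by auto
    then show False by auto
  qed
  have "card (Gen m) = card ((\<lambda>i::nat. {i}) ` {1..m}) + card ((\<lambda>i::nat. {1..i}) ` {2..m})"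
    unfolding Gen_def by (rule card_Un_disjoint) (use d in auto)
  also have "\<dots> = m + (m - 1)" using card_image[OF i1] card_image[OF i2] by simp
  finally show ?thesis using assms by simp
qed

lemma Gen_Suc: assumes "m \<ge> 1" shows "Gen (Suc m) = Gen m \<union> {{Suc m}, {1..Suc m}}"
proof -
  have a: "{1..Suc m} = insert (Suc m) {1..m}" by auto
  have b: "{2..Suc m} = insert (Suc m) {2..m}" using assms by auto
  show ?thesis unfolding Gen_def a b by auto
qed

lemma Gen_Suc_disj: "Gen m \<inter> {{Suc m}, {1..Suc m}} = {}"
  using Gen_sub[of _ m] by fastforce

lemma adj_iff: "AQ_adj n X Y \<longleftrightarrow> X \<in> AQ_vertices n \<and> (\<exists>D\<in>Gen n. Y = sd X D)"
proof
  assume h: "AQ_adj n X Y"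
  then have "(\<exists>i\<in>{1..n}. Y = sd X {i}) \<or> (\<exists>i\<in>{2..n}. Y = sd X {1..i})"
    by (simp add: AQ_adj_def flip_bit_def flip_upto_def sd_def)
  then have "\<exists>D\<in>Gen n. Y = sd X D" by (auto simp: Gen_def)
  with h show "X \<in> AQ_vertices n \<and> (\<exists>D\<in>Gen n. Y = sd X D)" by (simp add: AQ_adj_def)
next
  assume h: "X \<in> AQ_vertices n \<and> (\<exists>D\<in>Gen n. Y = sd X D)"
  then obtain D where D: "D \<in> Gen n" "Y = sd X D" by auto
  have "Y \<in> AQ_vertices n" using h D Gen_sub[OF D(1)] sd_sub by (auto simp: AQ_vertices_def)
  moreover have "X \<noteq> Y" using D Gen_ne sd_self_iff by metis
  moreover have "(\<exists>i\<in>{1..n}. Y = flip_bit X i) \<or> (\<exists>i\<in>{2..n}. Y = flip_upto X i)"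
    using D by (auto simp: Gen_def flip_bit_def flip_upto_def sd_def)
  ultimately show "AQ_adj n X Y" using h by (simp add: AQ_adj_def)
qed

definition bdG :: "nat set set \<Rightarrow> nat set set \<Rightarrow> nat" where
  "bdG G S = card {p \<in> S \<times> G. sd (fst p) (snd p) \<notin> S}"

lemma bdG_union:
  assumes "finite S" "finite G" "finite H" "G \<inter> H = {}"
  shows "bdG (G \<union> H) S = bdG G S + bdG H S"
proof -
  have "{p \<in> S \<times> (G \<union> H). sd (fst p) (snd p) \<notin> S} =
        {p \<in> S \<times> G. sd (fst p) (snd p) \<notin> S} \<union> {p \<in> S \<times> H. sd (fst p) (snd p) \<notin> S}" by auto
  then show ?thesis unfolding bdG_def using assms
    by (simp add: card_Un_disjoint disjoint_iff)
qed

lemma fin_filter: "finite A \<Longrightarrow> finite G \<Longrightarrow> finite {p \<in> A \<times> G. P p}"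
  by simp

lemma bdG_split:
  assumes "finite S" "finite G" "\<And>D. D \<in> G \<Longrightarrow> k \<notin> D"
  shows "bdG G S = bdG G {X \<in> S. k \<notin> X} + bdG G {X \<in> S. k \<in> X}"
proof -
  have eq: "{p \<in> S \<times> G. sd (fst p) (snd p) \<notin> S} =
        {p \<in> {X \<in> S. k \<notin> X} \<times> G. sd (fst p) (snd p) \<notin> {X \<in> S. k \<notin> X}} \<union>
        {p \<in> {X \<in> S. k \<in> X} \<times> G. sd (fst p) (snd p) \<notin> {X \<in> S. k \<in> X}}"
    using assms(3) by (auto simp: sd_mem)
  show ?thesis unfolding bdG_def eq
    by (rule card_Un_disjoint) (use assms in auto)
qed

lemma bdG_trans:
  assumes "finite S"
  shows "bdG G ((\<lambda>X. sd X T) ` S) = bdG G S"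
proof -
  let ?f = "\<lambda>p. (sd (fst p) T, snd p)"
  have inj: "inj_on ?f {p \<in> S \<times> G. sd (fst p) (snd p) \<notin> S}"
    by (auto simp: inj_on_def sd_inj1)
  have "?f ` {p \<in> S \<times> G. sd (fst p) (snd p) \<notin> S} =
        {p \<in> ((\<lambda>X. sd X T) ` S) \<times> G. sd (fst p) (snd p) \<notin> ((\<lambda>X. sd X T) ` S)}"
  proof (rule set_eqI, rule iffI)
    fix q assume "q \<in> ?f ` {p \<in> S \<times> G. sd (fst p) (snd p) \<notin> S}"
    then obtain X D where q: "q = (sd X T, D)" "X \<in> S" "D \<in> G" "sd X D \<notin> S" by auto
    have "sd (sd X T) D \<notin> (\<lambda>X. sd X T) ` S"
    proof
      assume "sd (sd X T) D \<in> (\<lambda>X. sd X T) ` S"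
      then obtain Z where "Z \<in> S" "sd (sd X T) D = sd Z T" by auto
      then have "sd X D = Z" by (metis sd_swap sd_inj1)
      with q \<open>Z \<in> S\<close> show False by simp
    qed
    with q show "q \<in> {p \<in> ((\<lambda>X. sd X T) ` S) \<times> G. sd (fst p) (snd p) \<notin> ((\<lambda>X. sd X T) ` S)}" by auto
  next
    fix q assume "q \<in> {p \<in> ((\<lambda>X. sd X T) ` S) \<times> G. sd (fst p) (snd p) \<notin> ((\<lambda>X. sd X T) ` S)}"
    then obtain X D where q: "q = (sd X T, D)" "X \<in> S" "D \<in> G" "sd (sd X T) D \<notin> (\<lambda>X. sd X T) ` S" by auto
    have "sd X D \<notin> S"
    proof
      assume "sd X D \<in> S"
      then have "sd (sd X D) T \<in> (\<lambda>X. sd X T) ` S" by auto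
      with q show False by (simp add: sd_swap)
    qed
    with q show "q \<in> ?f ` {p \<in> S \<times> G. sd (fst p) (snd p) \<notin> S}" by force
  qed
  then show ?thesis unfolding bdG_def using card_image[OF inj] by simp
qed

lemma bdG_cross:
  assumes "finite S" "finite H" "A \<subseteq> S" "\<And>X D. X \<in> A \<Longrightarrow> D \<in> H \<Longrightarrow> sd X D \<notin> A"
  shows "card H * card A \<le> bdG H S + card H * card (S - A)"
proof -
  let ?P = "{p \<in> A \<times> H. sd (fst p) (snd p) \<notin> S}"
  let ?Q = "{p \<in> A \<times> H. sd (fst p) (snd p) \<in> S}"
  have fA: "finite A" using finite_subset[OF assms(3,1)] .
  have eqU: "A \<times> H = ?P \<union> ?Q" by auto
  have "card (A \<times> H) \<le> card ?P + card ?Q"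
    using arg_cong[OF eqU, of card] card_Un_le[of ?P ?Q] by linarith
  moreover have "card ?P \<le> bdG H S" unfolding bdG_def
    by (rule card_mono) (use assms in auto)
  moreover have "card ?Q \<le> card ((S - A) \<times> H)"
  proof -
    let ?f = "\<lambda>p. (sd (fst p) (snd p), snd p)"
    have "inj_on ?f ?Q" by (auto simp: inj_on_def sd_inj1)
    moreover have "?f ` ?Q \<subseteq> (S - A) \<times> H" using assms(4) by auto
    moreover have "finite ((S - A) \<times> H)" using assms by simp
    ultimately show ?thesis by (rule card_inj_on_le)
  qed
  ultimately show ?thesis by (simp add: card_cartesian_product mult.commute)
qed

lemma bdG_compl:
  assumes "finite U" "S \<subseteq> Pow U" "\<And>D. D \<in> G \<Longrightarrow> D \<subseteq> U"
  shows "bdG G (Pow U - S) = bdG G S"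
proof -
  let ?f = "\<lambda>p. (sd (fst p) (snd p), snd p)"
  let ?A = "{p \<in> S \<times> G. sd (fst p) (snd p) \<notin> S}"
  let ?B = "{p \<in> (Pow U - S) \<times> G. sd (fst p) (snd p) \<notin> (Pow U - S)}"
  have inj: "inj_on ?f ?A"
    by (auto simp: inj_on_def sd_inj1)
  have "?f ` ?A = ?B"
  proof (rule set_eqI, rule iffI)
    fix q assume "q \<in> ?f ` ?A"
    then obtain X D where q: "q = (sd X D, D)" "X \<in> S" "D \<in> G" "sd X D \<notin> S" by auto
    have XU: "X \<subseteq> U" using q(2) assms(2) by blast
    have "sd X D \<subseteq> U" using sd_sub[OF XU assms(3)[OF q(3)]] .
    then show "q \<in> ?B" using q by simp
  next
    fix q assume qB: "q \<in> ?B"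
    obtain Y D where q: "q = (Y, D)" by (cases q)
    have Y: "Y \<subseteq> U" "Y \<notin> S" "D \<in> G" "sd Y D \<notin> Pow U - S" using qB q by simp_all
    have "sd Y D \<subseteq> U" using sd_sub[OF Y(1) assms(3)[OF Y(3)]] .
    then have "sd Y D \<in> S" using Y(4) by simp
    then have "(sd Y D, D) \<in> ?A" using Y by simp
    moreover have "q = ?f (sd Y D, D)" using q by simp
    ultimately show "q \<in> ?f ` ?A" by blast
  qed
  then show ?thesis unfolding bdG_def using card_image[OF inj] by simp
qed

lemma bdG_small:
  assumes "finite S" "finite G" "{} \<notin> G"
  shows "card S * card G + card S \<le> bdG G S + card S * card S"
proof -
  let ?P = "{p \<in> S \<times> G. sd (fst p) (snd p) \<notin> S}"
  let ?Q = "{p \<in> S \<times> G. sd (fst p) (snd p) \<in> S}"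
  let ?f = "\<lambda>p. (fst p, sd (fst p) (snd p))"
  let ?g = "\<lambda>x. (x,x)"
  have eqU: "S \<times> G = ?P \<union> ?Q" by auto
  have 1: "card (S \<times> G) \<le> card ?P + card ?Q"
    using arg_cong[OF eqU, of card] card_Un_le[of ?P ?Q] by linarith
  have inj: "inj_on ?f ?Q" unfolding inj_on_def using sd_inj2 by auto
  have injg: "inj_on ?g S" unfolding inj_on_def by simp
  have d: "?f ` ?Q \<inter> ?g ` S = {}"
  proof -
    { fix p assume "p \<in> ?Q" and e: "?f p \<in> ?g ` S"
      then have "sd (fst p) (snd p) = fst p" by auto
      then have "snd p = {}" by (simp add: sd_self_iff)
      with \<open>p \<in> ?Q\<close> assms(3) have False by auto }
    then show ?thesis by blast
  qed
  have sub: "?f ` ?Q \<union> ?g ` S \<subseteq> S \<times> S" by auto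
  have fQ: "finite ?Q" using assms by simp
  have "card (?f ` ?Q \<union> ?g ` S) = card (?f ` ?Q) + card (?g ` S)"
    by (rule card_Un_disjoint) (use fQ assms d in auto)
  also have "\<dots> = card ?Q + card S" using card_image[OF inj] card_image[OF injg] by simp
  finally have e: "card (?f ` ?Q \<union> ?g ` S) = card ?Q + card S" .
  have "card (?f ` ?Q \<union> ?g ` S) \<le> card (S \<times> S)"
    by (rule card_mono[OF _ sub]) (use assms(1) in simp)
  with e have 2: "card ?Q + card S \<le> card (S \<times> S)" by simp
  show ?thesis using 1 2 unfolding bdG_def by (simp add: card_cartesian_product)
qed

lemma arith_step:
  fixes m N a b f0 f1 t :: nat
  assumes m: "m \<ge> 4" and N: "N \<ge> 3*m+3" and a: "a \<le> N" and b: "b \<le> N"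
    and s1: "5 \<le> a+b" and s2: "a+b+5 \<le> 2*N"
    and fa1: "a = 1 \<or> a + 1 = N \<Longrightarrow> f0+1 \<ge> 2*m"
    and fa2: "a = 2 \<or> a + 2 = N \<Longrightarrow> f0+4 \<ge> 4*m"
    and fa3: "3 \<le> a \<Longrightarrow> a + 3 \<le> N \<Longrightarrow> f0+9 \<ge> 6*m"
    and fb1: "b = 1 \<or> b + 1 = N \<Longrightarrow> f1+1 \<ge> 2*m"
    and fb2: "b = 2 \<or> b + 2 = N \<Longrightarrow> f1+4 \<ge> 4*m"
    and fb3: "3 \<le> b \<Longrightarrow> b + 3 \<le> N \<Longrightarrow> f1+9 \<ge> 6*m"
    and t1: "t + 2*b \<ge> f0+f1+2*a" and t2: "t + 2*a \<ge> f0+f1+2*b"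
  shows "t+3 \<ge> 6*m"
proof -
  have A: "a = 0 \<or> a = N \<or> ((a=1 \<or> a+1=N) \<and> f0+1 \<ge> 2*m) \<or> ((a=2 \<or> a+2=N) \<and> f0+4 \<ge> 4*m) \<or> (3\<le>a \<and> a+3\<le>N \<and> f0+9 \<ge> 6*m)"
  proof -
    consider "a = 0" | "a = N" | "a = 1 \<or> a+1=N" | "a = 2 \<or> a+2=N" | "3\<le>a \<and> a+3\<le>N" using a by linarith
    then show ?thesis proof cases
      case 3 then show ?thesis using fa1 by blast next
      case 4 then show ?thesis using fa2 by blast next
      case 5 then show ?thesis using fa3 by blast qed auto
  qed
  have B: "b = 0 \<or> b = N \<or> ((b=1 \<or> b+1=N) \<and> f1+1 \<ge> 2*m) \<or> ((b=2 \<or> b+2=N) \<and> f1+4 \<ge> 4*m) \<or> (3\<le>b \<and> b+3\<le>N \<and> f1+9 \<ge> 6*m)"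
  proof -
    consider "b = 0" | "b = N" | "b = 1 \<or> b+1=N" | "b = 2 \<or> b+2=N" | "3\<le>b \<and> b+3\<le>N" using b by linarith
    then show ?thesis proof cases
      case 3 then show ?thesis using fb1 by blast next
      case 4 then show ?thesis using fb2 by blast next
      case 5 then show ?thesis using fb3 by blast qed auto
  qed
  from A B show ?thesis using m N a b s1 s2 t1 t2 by (elim disjE conjE; linarith)
qed

lemma arith_base:
  fixes a b f0 f1 t :: nat
  assumes a: "a \<le> 8" and b: "b \<le> 8"
    and s1: "5 \<le> a+b" and s2: "a+b \<le> 11"
    and fa1: "a = 1 \<or> a = 7 \<Longrightarrow> f0 \<ge> 5"
    and fa2: "a = 2 \<or> a = 6 \<Longrightarrow> f0 \<ge> 8"
    and fa3: "3 \<le> a \<Longrightarrow> a \<le> 5 \<Longrightarrow> f0 \<ge> 8"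
    and fb1: "b = 1 \<or> b = 7 \<Longrightarrow> f1 \<ge> 5"
    and fb2: "b = 2 \<or> b = 6 \<Longrightarrow> f1 \<ge> 8"
    and fb3: "3 \<le> b \<Longrightarrow> b \<le> 5 \<Longrightarrow> f1 \<ge> 8"
    and t1: "t + 2*b \<ge> f0+f1+2*a" and t2: "t + 2*a \<ge> f0+f1+2*b"
  shows "t \<ge> 15"
proof -
  have A: "a = 0 \<or> a = 8 \<or> ((a=1 \<or> a=7) \<and> f0 \<ge> 5) \<or> ((a=2 \<or> a=6) \<and> f0 \<ge> 8) \<or> (3\<le>a \<and> a\<le>5 \<and> f0 \<ge> 8)"
  proof -
    consider "a = 0" | "a = 8" | "a = 1 \<or> a=7" | "a = 2 \<or> a=6" | "3\<le>a \<and> a\<le>5" using a by linarith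
    then show ?thesis proof cases
      case 3 then show ?thesis using fa1 by blast next
      case 4 then show ?thesis using fa2 by blast next
      case 5 then show ?thesis using fa3 by blast qed auto
  qed
  have B: "b = 0 \<or> b = 8 \<or> ((b=1 \<or> b=7) \<and> f1 \<ge> 5) \<or> ((b=2 \<or> b=6) \<and> f1 \<ge> 8) \<or> (3\<le>b \<and> b\<le>5 \<and> f1 \<ge> 8)"
  proof -
    consider "b = 0" | "b = 8" | "b = 1 \<or> b=7" | "b = 2 \<or> b=6" | "3\<le>b \<and> b\<le>5" using b by linarith
    then show ?thesis proof cases
      case 3 then show ?thesis using fb1 by blast next
      case 4 then show ?thesis using fb2 by blast next
      case 5 then show ?thesis using fb3 by blast qed auto
  qed
  from A B show ?thesis using a b s1 s2 t1 t2 by (elim disjE conjE; linarith)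
qed

lemma arith_AQ3:
  fixes a b f0 f1 t :: nat
  assumes "a \<le> 4" "b \<le> 4" "a + b = 4"
    and "f0 + a*a \<ge> a*3 + a" and "f1 + b*b \<ge> b*3 + b"
    and t1: "t + 2*b \<ge> f0+f1+2*a" and t2: "t + 2*a \<ge> f0+f1+2*b"
  shows "t \<ge> 8"
proof -
  have "a = 0 \<or> a = 1 \<or> a = 2 \<or> a = 3 \<or> a = 4" using assms by linarith
  then show ?thesis using assms by (elim disjE; simp; linarith)
qed


abbreviation Bd :: "nat \<Rightarrow> nat set set \<Rightarrow> nat" where "Bd m S \<equiv> bdG (Gen m) S"

lemma fin_sub: assumes "S \<subseteq> Pow {1..m::nat}" shows "finite S"
  using assms by (rule finite_subset) simp

lemma card_Pow_m: "card (Pow {1..m::nat}) = 2^m" by (simp add: card_Pow)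

lemma card_sub_le: "S \<subseteq> Pow {1..m::nat} \<Longrightarrow> card S \<le> 2^m"
  by (metis card_Pow_m card_mono finite_Pow_iff finite_atLeastAtMost)

lemma small_bound:
  assumes "m \<ge> 1" "S \<subseteq> Pow {1..m}"
  shows "card S * (2*m - 1) + card S \<le> Bd m S + card S * card S"
  using bdG_small[OF fin_sub[OF assms(2)] finite_Gen, of m] Gen_ne[of _ m] card_Gen[OF assms(1)]
  by auto

lemma compl_bound:
  assumes "S \<subseteq> Pow {1..m}"
  shows "Bd m (Pow {1..m} - S) = Bd m S" "card (Pow {1..m} - S) + card S = 2^m"
proof -
  show "Bd m (Pow {1..m} - S) = Bd m S"
    by (rule bdG_compl) (use assms Gen_sub in auto)
  have "card (Pow {1..m} - S) = card (Pow {1..m}) - card S"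
    using assms by (simp add: card_Diff_subset fin_sub)
  then show "card (Pow {1..m} - S) + card S = 2^m"
    using card_sub_le[OF assms] card_Pow_m[of m] by simp
qed

lemma decomp:
  assumes m: "m \<ge> 1" and S: "S \<subseteq> Pow {1..Suc m}"
  shows "\<exists>S0 S1. S0 \<subseteq> Pow {1..m} \<and> S1 \<subseteq> Pow {1..m} \<and> card S0 + card S1 = card S \<and>
     Bd m S0 + Bd m S1 + 2 * card S0 \<le> Bd (Suc m) S + 2 * card S1 \<and>
     Bd m S0 + Bd m S1 + 2 * card S1 \<le> Bd (Suc m) S + 2 * card S0"
proof -
  define S0 where "S0 = {X \<in> S. Suc m \<notin> X}"
  define S1f where "S1f = {X \<in> S. Suc m \<in> X}"
  define S1 where "S1 = (\<lambda>X. sd X {Suc m}) ` S1f"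
  define H where "H = {{Suc m}, {1..Suc m}}"
  have fS: "finite S" using fin_sub[OF S] .
  have fS0: "finite S0" "finite S1f" using fS by (auto simp: S0_def S1f_def)
  have S0sub: "S0 \<subseteq> Pow {1..m}"
  proof
    fix X assume "X \<in> S0"
    then have "X \<subseteq> {1..Suc m}" "Suc m \<notin> X" using S by (auto simp: S0_def)
    then show "X \<in> Pow {1..m}" by (auto simp: subset_iff le_Suc_eq)
  qed
  have S1sub: "S1 \<subseteq> Pow {1..m}"
  proof
    fix Y assume "Y \<in> S1"
    then obtain X where X: "X \<in> S" "Suc m \<in> X" "Y = sd X {Suc m}" by (auto simp: S1_def S1f_def)
    then have "X \<subseteq> {1..Suc m}" using S by auto
    with X show "Y \<in> Pow {1..m}" by (auto simp: sd_def subset_iff le_Suc_eq)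
  qed
  have inj: "inj_on (\<lambda>X. sd X {Suc m}) S1f" by (auto simp: inj_on_def sd_inj1)
  have c1: "card S1 = card S1f" unfolding S1_def using card_image[OF inj] .
  have cS: "card S = card S0 + card S1f"
  proof -
    have "S = S0 \<union> S1f" "S0 \<inter> S1f = {}" by (auto simp: S0_def S1f_def)
    then show ?thesis using fS0 by (simp add: card_Un_disjoint)
  qed
  have e1: "Bd (Suc m) S = Bd m S + bdG H S"
    unfolding Gen_Suc[OF m] H_def by (rule bdG_union) (use fS Gen_Suc_disj in auto)
  have e2: "Bd m S = Bd m S0 + Bd m S1f"
    unfolding S0_def S1f_def by (rule bdG_split) (use fS Gen_sub in force)+
  have e3: "Bd m S1 = Bd m S1f" unfolding S1_def by (rule bdG_trans) (use fS0 in auto)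
  have cH: "card H = 2"
  proof -
    have "{Suc m} \<noteq> {1..Suc m}" using m by (metis atLeastAtMost_iff le_add2 plus_1_eq_Suc singletonD
        le_antisym not_less_eq_eq nat_le_linear)
    then show ?thesis by (simp add: H_def)
  qed
  have x1: "card H * card S0 \<le> bdG H S + card H * card (S - S0)"
    by (rule bdG_cross) (use fS in \<open>auto simp: S0_def H_def sd_mem\<close>)
  have x2: "card H * card S1f \<le> bdG H S + card H * card (S - S1f)"
    by (rule bdG_cross) (use fS in \<open>auto simp: S1f_def H_def sd_mem\<close>)
  have "S - S0 = S1f" "S - S1f = S0" by (auto simp: S0_def S1f_def)
  with x1 x2 cH have x1': "2 * card S0 \<le> bdG H S + 2 * card S1f"
    and x2': "2 * card S1f \<le> bdG H S + 2 * card S0" by auto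
  show ?thesis
    by (rule exI[of _ S0], rule exI[of _ S1]) (use S0sub S1sub c1 cS e1 e2 e3 x1' x2' in simp)
qed


lemma small34:
  assumes "m \<ge> 4" "S \<subseteq> Pow {1..m}" "card S = 3 \<or> card S = 4"
  shows "6*m \<le> Bd m S + 9"
proof -
  have h: "card S * (2*m - 1) + card S \<le> Bd m S + card S * card S"
    using small_bound[OF _ assms(2)] assms(1) by simp
  from assms(3) show ?thesis
  proof
    assume "card S = 3" with h show ?thesis by simp
  next
    assume "card S = 4" with h assms(1) show ?thesis by simp
  qed
qed

lemma small34c:
  assumes "m \<ge> 4" "S \<subseteq> Pow {1..m}" "card S + 3 = 2^m \<or> card S + 4 = 2^m"
  shows "6*m \<le> Bd m S + 9"
proof -
  have "card (Pow {1..m} - S) = 3 \<or> card (Pow {1..m} - S) = 4"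
    using compl_bound(2)[OF assms(2)] assms(3) by linarith
  from small34[OF assms(1) _ this] compl_bound(1)[OF assms(2)] show ?thesis by simp
qed

lemma facts12:
  assumes "m \<ge> 1" "T \<subseteq> Pow {1..m}"
  shows "card T = 1 \<or> card T + 1 = 2^m \<Longrightarrow> 2*m \<le> Bd m T + 1"
    and "card T = 2 \<or> card T + 2 = 2^m \<Longrightarrow> 4*m \<le> Bd m T + 4"
proof -
  have h: "\<And>T. T \<subseteq> Pow {1..m} \<Longrightarrow> card T * (2*m - 1) + card T \<le> Bd m T + card T * card T"
    using small_bound assms(1) by blast
  have c: "card (Pow {1..m} - T) + card T = 2^m" "Bd m (Pow {1..m} - T) = Bd m T"
    using compl_bound[OF assms(2)] by auto
  have T': "Pow {1..m} - T \<subseteq> Pow {1..m}" by blast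
  show "card T = 1 \<or> card T + 1 = 2^m \<Longrightarrow> 2*m \<le> Bd m T + 1"
  proof (elim disjE)
    assume "card T = 1" with h[OF assms(2)] assms(1) show ?thesis by simp
  next
    assume "card T + 1 = 2^m" then have "card (Pow {1..m} - T) = 1" using c by linarith
    with h[OF T'] c assms(1) show ?thesis by simp
  qed
  show "card T = 2 \<or> card T + 2 = 2^m \<Longrightarrow> 4*m \<le> Bd m T + 4"
  proof (elim disjE)
    assume "card T = 2" with h[OF assms(2)] assms(1) show ?thesis by simp
  next
    assume "card T + 2 = 2^m" then have "card (Pow {1..m} - T) = 2" using c by linarith
    with h[OF T'] c assms(1) show ?thesis by simp
  qed
qed

lemma AQ3:
  assumes "S \<subseteq> Pow {1..3}" "3 \<le> card S" "card S \<le> 5"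
  shows "8 \<le> Bd 3 S"
proof -
  have h: "\<And>T. T \<subseteq> Pow {1..3} \<Longrightarrow> card T * 5 + card T \<le> Bd 3 T + card T * card T"
    using small_bound[of 3] by simp
  consider "card S = 3" | "card S = 4" | "card S = 5" using assms by linarith
  then show ?thesis
  proof cases
    case 1 with h[OF assms(1)] show ?thesis by simp
  next
    case 3
    have c: "card (Pow {1..3} - S) + card S = 2^3" "Bd 3 (Pow {1..3} - S) = Bd 3 S"
      using compl_bound[OF assms(1)] by auto
    have "card (Pow {1..3} - S) = 3" using c 3 by simp
    with h[of "Pow {1..3} - S"] c show ?thesis by auto
  next
    case 2
    obtain S0 S1 where d: "S0 \<subseteq> Pow {1..2}" "S1 \<subseteq> Pow {1..2}" "card S0 + card S1 = card S"
      "Bd 2 S0 + Bd 2 S1 + 2 * card S0 \<le> Bd (Suc 2) S + 2 * card S1"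
      "Bd 2 S0 + Bd 2 S1 + 2 * card S1 \<le> Bd (Suc 2) S + 2 * card S0"
      using decomp[of 2 S] assms(1) by (auto simp: numeral_3_eq_3)
    have s0: "card S0 * 3 + card S0 \<le> Bd 2 S0 + card S0 * card S0"
      using small_bound[OF _ d(1)] by simp
    have s1: "card S1 * 3 + card S1 \<le> Bd 2 S1 + card S1 * card S1"
      using small_bound[OF _ d(2)] by simp
    have "card S0 \<le> 4" "card S1 \<le> 4" using card_sub_le[OF d(1)] card_sub_le[OF d(2)] by simp_all
    from arith_AQ3[OF this _ s0 s1] d(3,4,5) 2 show ?thesis by (simp add: numeral_3_eq_3)
  qed
qed

lemma pow_ge: "m \<ge> 4 \<Longrightarrow> 3*m+3 \<le> (2::nat)^m"
proof (induction m rule: nat_induct_at_least)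
  case base then show ?case by simp
next
  case (Suc m) then show ?case by simp
qed

lemma iso:
  assumes "n \<ge> 4"
  shows "S \<subseteq> Pow {1..n} \<Longrightarrow> 3 \<le> card S \<Longrightarrow> card S + 3 \<le> 2^n \<Longrightarrow> 6*n \<le> Bd n S + 9"
  using assms
proof (induction n arbitrary: S rule: nat_induct_at_least)
  case base
  have S: "S \<subseteq> Pow {1..Suc 3}" using base by (simp add: numeral_eq_Suc)
  show ?case
  proof (cases "card S \<le> 4 \<or> card S + 4 \<ge> 2^4")
    case True
    then have "card S = 3 \<or> card S = 4 \<or> card S + 3 = 2^4 \<or> card S + 4 = 2^4" using base by auto
    then show ?thesis using small34[of 4 S] small34c[of 4 S] base by auto
  next
    case False
    obtain S0 S1 where d: "S0 \<subseteq> Pow {1..3}" "S1 \<subseteq> Pow {1..3}" "card S0 + card S1 = card S"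
      "Bd 3 S0 + Bd 3 S1 + 2 * card S0 \<le> Bd (Suc 3) S + 2 * card S1"
      "Bd 3 S0 + Bd 3 S1 + 2 * card S1 \<le> Bd (Suc 3) S + 2 * card S0"
      using decomp[of 3 S] S by auto
    have N: "(2::nat)^3 = 8" by simp
    have a: "card S0 \<le> 8" "card S1 \<le> 8" using card_sub_le[OF d(1)] card_sub_le[OF d(2)] by simp_all
    have f0: "card S0 = 1 \<or> card S0 = 7 \<Longrightarrow> Bd 3 S0 \<ge> 5"
      using facts12(1)[OF _ d(1)] by fastforce
    have f0': "card S0 = 2 \<or> card S0 = 6 \<Longrightarrow> Bd 3 S0 \<ge> 8"
      using facts12(2)[OF _ d(1)] by fastforce
    have f0'': "3 \<le> card S0 \<Longrightarrow> card S0 \<le> 5 \<Longrightarrow> Bd 3 S0 \<ge> 8"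
      using AQ3[OF d(1)] by simp
    have f1: "card S1 = 1 \<or> card S1 = 7 \<Longrightarrow> Bd 3 S1 \<ge> 5"
      using facts12(1)[OF _ d(2)] by fastforce
    have f1': "card S1 = 2 \<or> card S1 = 6 \<Longrightarrow> Bd 3 S1 \<ge> 8"
      using facts12(2)[OF _ d(2)] by fastforce
    have f1'': "3 \<le> card S1 \<Longrightarrow> card S1 \<le> 5 \<Longrightarrow> Bd 3 S1 \<ge> 8"
      using AQ3[OF d(2)] by simp
    have "15 \<le> Bd (Suc 3) S"
      by (rule arith_base[OF a _ _ f0 f0' f0'' f1 f1' f1'' d(4) d(5)]) (use False d(3) in auto)
    then show ?thesis by (simp add: numeral_eq_Suc)
  qed
next
  case (Suc m)
  have m1: "m \<ge> 1" using Suc by simp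
  show ?case
  proof (cases "card S \<le> 4 \<or> card S + 4 \<ge> 2^Suc m")
    case True
    then have "card S = 3 \<or> card S = 4 \<or> card S + 3 = 2^Suc m \<or> card S + 4 = 2^Suc m" using Suc by auto
    then show ?thesis using small34[of "Suc m" S] small34c[of "Suc m" S] Suc by auto
  next
    case False
    obtain S0 S1 where d: "S0 \<subseteq> Pow {1..m}" "S1 \<subseteq> Pow {1..m}" "card S0 + card S1 = card S"
      "Bd m S0 + Bd m S1 + 2 * card S0 \<le> Bd (Suc m) S + 2 * card S1"
      "Bd m S0 + Bd m S1 + 2 * card S1 \<le> Bd (Suc m) S + 2 * card S0"
      using decomp[OF m1, of S] Suc by auto
    have a: "card S0 \<le> 2^m" "card S1 \<le> 2^m" using card_sub_le[OF d(1)] card_sub_le[OF d(2)] by simp_all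
    have f0: "card S0 = 1 \<or> card S0 + 1 = 2^m \<Longrightarrow> Bd m S0 + 1 \<ge> 2*m"
      using facts12(1)[OF m1 d(1)] by simp
    have f0': "card S0 = 2 \<or> card S0 + 2 = 2^m \<Longrightarrow> Bd m S0 + 4 \<ge> 4*m"
      using facts12(2)[OF m1 d(1)] by simp
    have f0'': "3 \<le> card S0 \<Longrightarrow> card S0 + 3 \<le> 2^m \<Longrightarrow> Bd m S0 + 9 \<ge> 6*m"
      using Suc.IH[OF d(1)] by simp
    have f1: "card S1 = 1 \<or> card S1 + 1 = 2^m \<Longrightarrow> Bd m S1 + 1 \<ge> 2*m"
      using facts12(1)[OF m1 d(2)] by simp
    have f1': "card S1 = 2 \<or> card S1 + 2 = 2^m \<Longrightarrow> Bd m S1 + 4 \<ge> 4*m"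
      using facts12(2)[OF m1 d(2)] by simp
    have f1'': "3 \<le> card S1 \<Longrightarrow> card S1 + 3 \<le> 2^m \<Longrightarrow> Bd m S1 + 9 \<ge> 6*m"
      using Suc.IH[OF d(2)] by simp
    have "Bd (Suc m) S + 3 \<ge> 6*m"
      by (rule arith_step[OF Suc.hyps pow_ge[OF Suc.hyps] a _ _ f0 f0' f0'' f1 f1' f1'' d(4) d(5)])
        (use False d(3) in auto)
    then show ?thesis by simp
  qed
qed


lemma adj_iff2: "AQ_adj n X Y \<longleftrightarrow> X \<in> Pow {1..n} \<and> Y \<in> Pow {1..n} \<and> sd X Y \<in> Gen n"
proof -
  have e: "sd X (sd X Y) = Y" "\<And>D. sd X (sd X D) = D" by (auto simp: sd_def)
  show ?thesis unfolding adj_iff AQ_vertices_def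
    by (metis e Gen_sub sd_sub PowD PowI)
qed

lemma adj_sym: "AQ_adj n X Y \<Longrightarrow> AQ_adj n Y X"
proof -
  have "sd X Y = sd Y X" by (auto simp: sd_def)
  then show "AQ_adj n X Y \<Longrightarrow> AQ_adj n Y X" by (simp add: adj_iff2)
qed

lemma edge_adj: "{a, b} \<in> AQ_edges n \<Longrightarrow> AQ_adj n a b"
  unfolding AQ_edges_def by (auto simp: doubleton_eq_iff intro: adj_sym)

lemma finite_edges: "finite (AQ_edges n)"
proof -
  have "AQ_edges n \<subseteq> Pow (Pow {1..n})"
    unfolding AQ_edges_def by (auto simp: AQ_adj_def AQ_vertices_def)
  then show ?thesis by (rule finite_subset) simp
qed

definition bedges :: "nat \<Rightarrow> nat set set \<Rightarrow> nat set set set" where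
  "bedges n C = (\<lambda>p. {fst p, sd (fst p) (snd p)}) ` {p \<in> C \<times> Gen n. sd (fst p) (snd p) \<notin> C}"

lemma card_bedges: "card (bedges n C) = Bd n C"
proof -
  have "inj_on (\<lambda>p. {fst p, sd (fst p) (snd p)}) {p \<in> C \<times> Gen n. sd (fst p) (snd p) \<notin> C}"
  proof (rule inj_onI)
    fix p q assume p: "p \<in> {p \<in> C \<times> Gen n. sd (fst p) (snd p) \<notin> C}"
      and q: "q \<in> {p \<in> C \<times> Gen n. sd (fst p) (snd p) \<notin> C}"
      and e: "{fst p, sd (fst p) (snd p)} = {fst q, sd (fst q) (snd q)}"
    have "fst p = fst q" using p q e by (auto simp: doubleton_eq_iff)
    then have "snd p = snd q" using e sd_inj2 by (metis doubleton_eq_iff)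
    with \<open>fst p = fst q\<close> show "p = q" by (simp add: prod_eq_iff)
  qed
  then show ?thesis unfolding bedges_def bdG_def by (rule card_image)
qed

lemma bedges_sub: "C \<subseteq> Pow {1..n} \<Longrightarrow> bedges n C \<subseteq> AQ_edges n"
  unfolding bedges_def AQ_edges_def by (force simp: adj_iff AQ_vertices_def)

lemma bedges_in: assumes "e \<in> bedges n C" shows "\<exists>X Y. e = {X,Y} \<and> X \<in> C \<and> Y \<notin> C"
proof -
  from assms obtain X D where "e = {X, sd X D}" "X \<in> C" "sd X D \<notin> C" by (auto simp: bedges_def)
  then show ?thesis by blast
qed

lemma lower:
  assumes n: "n \<ge> 4" and cut: "h_edge_cut (AQ_vertices n) (AQ_edges n) 2 F"
  shows "6*n - 9 \<le> card F"
proof -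
  let ?V = "AQ_vertices n" and ?E = "AQ_edges n"
  let ?R = "edge_rel (?E - F)"
  have FE: "F \<subseteq> ?E" and nc: "\<not> graph_connected ?V (?E - F)"
    and big: "\<forall>x\<in>?V. card (component ?V (?E - F) x) > 2" using cut by (auto simp: h_edge_cut_def)
  obtain x y where xy: "x \<in> ?V" "y \<in> ?V" "(x, y) \<notin> ?R\<^sup>*" using nc by (auto simp: graph_connected_def)
  define C where "C = component ?V (?E - F) x"
  define D where "D = component ?V (?E - F) y"
  have symR: "sym ?R" by (auto simp: sym_def edge_rel_def insert_commute)
  have CV: "C \<subseteq> Pow {1..n}" by (auto simp: C_def component_def AQ_vertices_def)
  have DC: "D \<subseteq> Pow {1..n} - C"
  proof
    fix z assume z: "z \<in> D"
    then have "(y, z) \<in> ?R\<^sup>*" "z \<in> ?V" by (auto simp: D_def component_def)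
    then have "(z, y) \<in> ?R\<^sup>*" using symR by (meson sym_rtrancl symD)
    moreover have "z \<notin> C"
    proof
      assume "z \<in> C" then have "(x, z) \<in> ?R\<^sup>*" by (simp add: C_def component_def)
      with \<open>(z, y) \<in> ?R\<^sup>*\<close> have "(x,y) \<in> ?R\<^sup>*" by simp
      with xy show False by simp
    qed
    ultimately show "z \<in> Pow {1..n} - C" using \<open>z \<in> ?V\<close> by (simp add: AQ_vertices_def)
  qed
  have "2 < card C" using big xy(1) unfolding C_def by blast
  then have cC: "card C \<ge> 3" by simp
  have "2 < card D" using big xy(2) unfolding D_def by blast
  then have cD: "card D \<ge> 3" by simp
  have "card D \<le> card (Pow {1..n} - C)" by (rule card_mono) (use DC in auto)
  then have "card C + 3 \<le> 2^n" using compl_bound(2)[OF CV] cD by linarith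
  from iso[OF n CV cC this] have i: "6*n \<le> Bd n C + 9" .
  have "bedges n C \<subseteq> F"
  proof
    fix e assume e: "e \<in> bedges n C"
    then obtain X Dg where XD: "e = {X, sd X Dg}" "X \<in> C" "Dg \<in> Gen n" "sd X Dg \<notin> C"
      by (auto simp: bedges_def)
    have eE: "e \<in> ?E" using bedges_sub[OF CV] e by auto
    show "e \<in> F"
    proof (rule ccontr)
      assume "e \<notin> F"
      have "X \<noteq> sd X Dg" using XD by auto
      with eE \<open>e \<notin> F\<close> XD have "(X, sd X Dg) \<in> ?R" by (simp add: edge_rel_def)
      moreover have "(x, X) \<in> ?R\<^sup>*" using XD by (simp add: C_def component_def)
      ultimately have "(x, sd X Dg) \<in> ?R\<^sup>*" by simp
      moreover have "sd X Dg \<in> ?V" using edge_adj eE XD(1) by (simp add: AQ_adj_def)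
      ultimately have "sd X Dg \<in> C" by (simp add: C_def component_def)
      with XD show False by simp
    qed
  qed
  moreover have "finite F" using FE finite_edges finite_subset by blast
  ultimately have "card (bedges n C) \<le> card F" by (simp add: card_mono)
  with i card_bedges show ?thesis by simp
qed


lemma upper_card:
  assumes n: "n \<ge> 2"
  shows "card (bedges n {{}, {1}, {2}}) + 9 \<le> 6*n"
proof -
  let ?T = "{{}, {1}, {2}} :: nat set set"
  let ?P = "{p \<in> ?T \<times> Gen n. sd (fst p) (snd p) \<notin> ?T}"
  let ?Q = "{p \<in> ?T \<times> Gen n. sd (fst p) (snd p) \<in> ?T}"
  let ?Six = "{({},{1}),({},{2}),({1},{1}),({1},{1,2}),({2},{2}),({2},{1,2})} :: (nat set \<times> nat set) set"
  have g: "{1} \<in> Gen n" "{2} \<in> Gen n" "{1,2} \<in> Gen n" using n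
    by (auto simp: Gen_def image_iff intro!: bexI[of _ 2])
  have six: "?Six \<subseteq> ?Q" using g by (auto simp: sd_def)
  have c6: "card ?Six = 6" by (simp add: doubleton_eq_iff)
  have fT: "finite (?T \<times> Gen n)" by simp
  have "card ?Six \<le> card ?Q" by (rule card_mono) (use six fT in auto)
  moreover have "card ?P + card ?Q = card (?T \<times> Gen n)"
  proof -
    have "?T \<times> Gen n = ?P \<union> ?Q" "?P \<inter> ?Q = {}" by auto
    then show ?thesis using fT by (metis (no_types, lifting) card_Un_disjoint finite_Un)
  qed
  moreover have "card (?T \<times> Gen n) = 3 * (2*n - 1)"
    using card_Gen[of n] n by (simp add: card_cartesian_product)
  ultimately have "card ?P + 6 \<le> 3 * (2*n - 1)" using c6 by linarith
  then show ?thesis using card_bedges[of n ?T] n unfolding bdG_def by simp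
qed


lemma upper_cut:
  assumes n: "n \<ge> 4"
  shows "h_edge_cut (AQ_vertices n) (AQ_edges n) 2 (bedges n {{}, {1}, {2}})"
proof -
  let ?T = "{{}, {1}, {2}} :: nat set set"
  let ?V = "AQ_vertices n" and ?E = "AQ_edges n"
  let ?F = "bedges n ?T"
  let ?R = "edge_rel (?E - ?F)"
  have TV: "?T \<subseteq> Pow {1..n}" using n by auto
  have FE: "?F \<subseteq> ?E" by (rule bedges_sub[OF TV])
  have nF1: "{a, b} \<notin> ?F" if "a \<notin> ?T" "b \<notin> ?T" for a b
  proof
    assume "{a, b} \<in> ?F"
    from bedges_in[OF this] obtain X Y where "{a,b} = {X,Y}" "X \<in> ?T" by blast
    with that show False by (auto simp: doubleton_eq_iff)
  qed
  have nF2: "{a, b} \<notin> ?F" if "a \<in> ?T" "b \<in> ?T" for a b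
  proof
    assume "{a, b} \<in> ?F"
    from bedges_in[OF this] obtain X Y where "{a,b} = {X,Y}" "Y \<notin> ?T" by blast
    with that show False by (auto simp: doubleton_eq_iff)
  qed
  have edgeI: "AQ_adj n a b \<Longrightarrow> {a, b} \<in> ?E" for a b unfolding AQ_edges_def by blast
  have closed: "(a, b) \<in> ?R\<^sup>* \<Longrightarrow> a \<in> ?T \<Longrightarrow> b \<in> ?T" for a b
  proof (induction rule: rtrancl_induct)
    case base then show ?case .
  next
    case (step b c)
    have hb: "b \<in> ?T" using step by blast
    show ?case
    proof (rule ccontr)
      assume c: "c \<notin> ?T"
      have bc0: "{b, c} \<in> ?E - ?F" using step(2) unfolding edge_rel_def by simp
      then have bc: "{b, c} \<in> ?E" "{b, c} \<notin> ?F" by simp_all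
      from edge_adj[OF bc(1)] obtain D where D: "D \<in> Gen n" "c = sd b D" unfolding adj_iff by blast
      have "(b, D) \<in> {p \<in> ?T \<times> Gen n. sd (fst p) (snd p) \<notin> ?T}" using D c hb by simp
      moreover have "{b, c} = (\<lambda>p. {fst p, sd (fst p) (snd p)}) (b, D)" using D(2) by simp
      ultimately have "{b, c} \<in> ?F" unfolding bedges_def by (rule rev_image_eqI)
      with bc show False by simp
    qed
  qed
  have nc: "\<not> graph_connected ?V (?E - ?F)"
  proof
    assume "graph_connected ?V (?E - ?F)"
    moreover have "{} \<in> ?V" "{3} \<in> ?V" using n by (auto simp: AQ_vertices_def)
    ultimately have "({}, {3}) \<in> ?R\<^sup>*" by (simp add: graph_connected_def)
    from closed[OF this] show False by auto
  qed
  have fcomp: "finite (component ?V (?E - ?F) x)" for x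
    by (rule finite_subset[of _ ?V]) (auto simp: component_def AQ_vertices_def)
  have comp: "card (component ?V (?E - ?F) x) > 2" if x: "x \<in> ?V" for x
  proof (cases "x \<in> ?T")
    case True
    have "?T \<subseteq> component ?V (?E - ?F) x"
    proof
      fix t assume t: "t \<in> ?T"
      have "(x, t) \<in> ?R\<^sup>*"
      proof (cases "x = t")
        case False
        have "sd x t \<in> Gen n"
        proof -
          have g: "{1} \<in> Gen n" "{2} \<in> Gen n" "{1,2} \<in> Gen n" using n
            by (auto simp: Gen_def image_iff intro!: bexI[of _ 2])
          have v: "sd {} {1::nat} = {1}" "sd {} {2} = {2}" "sd {1} {} = {1}" "sd {2} {} = {2}"
            "sd {1} {2} = {1,2}" "sd {2} {1} = {1,2}" by (auto simp: sd_def)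
          have xt: "x = {} \<or> x = {1} \<or> x = {2}" "t = {} \<or> t = {1} \<or> t = {2}" using True t by simp_all
          from xt(1) show ?thesis
          proof (elim disjE)
            assume x: "x = {}"
            from xt(2) show ?thesis using False g v unfolding x by (elim disjE) simp_all
          next
            assume x: "x = {1}"
            from xt(2) show ?thesis using False g v unfolding x by (elim disjE) simp_all
          next
            assume x: "x = {2}"
            from xt(2) show ?thesis using False g v unfolding x by (elim disjE) simp_all
          qed
        qed
        moreover have "x \<in> Pow {1..n}" "t \<in> Pow {1..n}" using TV True t by blast+
        ultimately have "AQ_adj n x t" unfolding adj_iff2 by blast
        then have "(x, t) \<in> ?R" using edgeI nF2[OF True t] False by (simp add: edge_rel_def)
        then show ?thesis by simp
      qed simp
      then show "t \<in> component ?V (?E - ?F) x" using t TV by (auto simp: component_def AQ_vertices_def)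
    qed
    then have "card ?T \<le> card (component ?V (?E - ?F) x)" by (rule card_mono[OF fcomp])
    then show ?thesis by simp
  next
    case False
    let ?N = "(\<lambda>D. sd x D) ` Gen n"
    have inj: "inj_on (\<lambda>D. sd x D) (Gen n)" by (auto simp: inj_on_def sd_inj2)
    have cN: "card ?N = 2*n - 1" using card_image[OF inj] card_Gen[of n] n by simp
    have "card ?N - card ?T \<le> card (?N - ?T)" by (rule diff_card_le_card_Diff) simp
    then have c1: "card (?N - ?T) \<ge> 2*n - 4" using cN by simp
    have "?N - ?T \<subseteq> component ?V (?E - ?F) x"
    proof
      fix y assume y: "y \<in> ?N - ?T"
      then obtain D where D: "D \<in> Gen n" "y = sd x D" by auto
      have adj: "AQ_adj n x y" using x D by (auto simp: adj_iff)
      then have "y \<in> ?V" "x \<noteq> y" by (auto simp: AQ_adj_def)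
      moreover have "(x, y) \<in> ?R" using edgeI[OF adj] nF1[OF False] y \<open>x \<noteq> y\<close>
        by (simp add: edge_rel_def)
      ultimately show "y \<in> component ?V (?E - ?F) x" by (simp add: component_def)
    qed
    then have "card (?N - ?T) \<le> card (component ?V (?E - ?F) x)" by (rule card_mono[OF fcomp])
    with c1 n show ?thesis by linarith
  qed
  show ?thesis unfolding h_edge_cut_def using FE nc comp by blast
qed

theorem theorem3p2:
  fixes n :: nat
  assumes "n \<ge> 4"
  shows "extra_edge_connectivity (AQ_vertices n) (AQ_edges n) 2 = 6 * n - 9"
  unfolding extra_edge_connectivity_def
proof (rule Least_equality)
  let ?F = "bedges n {{}, {1}, {2}}"
  have "card ?F + 9 \<le> 6*n" using upper_card assms by simp
  moreover have "6*n - 9 \<le> card ?F" using lower[OF assms upper_cut[OF assms]] .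
  ultimately have "card ?F = 6*n - 9" by linarith
  then show "\<exists>F. h_edge_cut (AQ_vertices n) (AQ_edges n) 2 F \<and> card F = 6 * n - 9"
    using upper_cut[OF assms] by blast
next
  fix k assume "\<exists>F. h_edge_cut (AQ_vertices n) (AQ_edges n) 2 F \<and> card F = k"
  then show "6 * n - 9 \<le> k" using lower[OF assms] by blast
qed

end
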